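(* Let $f\in\mathbb{Q}[x]$ be a convex univariate polynomial of degree $4$. If the minimum value of $f$ over $\mathbb{R}$ is rational, then the minimizer of $f$ is rational. *)

theory Defs
  imports "HOL-Analysis.Analysis" "HOL-Computational_Algebra.Polynomial"
begin

end

theory Submission
  imports Defs "HOL-Computational_Algebra.Computational_Algebra" "HOL-Computational_Algebra.Field_as_Ring"
begin

abbreviation R :: "rat poly \<Rightarrow> real poly" where "R p \<equiv> map_poly of_rat p"

lemma R_coeff [simp]: "coeff (R p) n = of_rat (coeff p n)"
  by (simp add: coeff_map_poly)

lemma R_degree [simp]: "degree (R p) = degree p"
  by (simp add: degree_map_poly)

lemma R_mult: "R (p * q) = R p * R q"
  by (rule poly_eqI) (simp add: coeff_mult of_rat_sum of_rat_mult)

lemma R_add: "R (p + q) = R p + R q"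
  by (rule poly_eqI) (simp add: of_rat_add)

lemma R_diff: "R (p - q) = R p - R q"
  by (rule poly_eqI) (simp add: of_rat_diff)

lemma R_const: "R [:c:] = [:of_rat c:]"
  by (rule poly_eqI) (simp add: coeff_pCons split: nat.splits)

lemma R_pderiv: "R (pderiv p) = pderiv (R p)"
  by (rule poly_eqI) (simp add: coeff_pderiv of_rat_mult of_rat_add)

lemma R_poly: "poly (R p) (of_rat x) = of_rat (poly p x)"
  by (simp add: poly_altdef of_rat_sum of_rat_mult of_rat_power)

lemma R_dvd: "p dvd q \<Longrightarrow> R p dvd R q"
  by (auto simp: R_mult)

theorem lemmaC3:
  fixes f :: "rat poly"
  assumes "degree f = 4"
    and "convex_on UNIV (\<lambda>x::real. poly (map_poly of_rat f) x)"
    and "(INF x::real. poly (map_poly of_rat f) x) \<in> \<rat>"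
  shows "\<forall>x::real. (\<forall>y. poly (map_poly of_rat f) x \<le> poly (map_poly of_rat f) y) \<longrightarrow> x \<in> \<rat>"
proof (intro allI impI)
  fix x0 :: real
  define F where "F = R f"
  assume min: "\<forall>y. poly (map_poly of_rat f) x0 \<le> poly (map_poly of_rat f) y"
  hence minF: "\<And>y. poly F x0 \<le> poly F y" unfolding F_def by blast
  define m where "m = poly F x0"
  have degF: "degree F = 4" using assms(1) by (simp add: F_def)
  have cvx: "convex_on UNIV (poly F)" using assms(2) by (simp add: F_def)
  have INF: "(INF x::real. poly F x) = m"
    unfolding m_def by (rule cInf_eq_minimum) (auto simp: minF)
  have "m \<in> \<rat>" using assms(3) INF by (simp add: F_def)
  then obtain q where q: "m = of_rat q" by (auto elim: Rats_cases)
  have uniq: "y = x0" if "poly F y = m" for y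
  proof (rule ccontr)
    assume ne: "y \<noteq> x0"
    have "{min x0 y..max x0 y} \<subseteq> {z. poly (F - [:m:]) z = 0}"
    proof
      fix z assume z: "z \<in> {min x0 y..max x0 y}"
      define t where "t = (z - x0) / (y - x0)"
      have t01: "0 \<le> t" "t \<le> 1" using z ne
        by (auto simp: t_def divide_simps split: if_splits)
      have "t * (y - x0) = z - x0" using ne by (simp add: t_def)
      hence zt: "z = (1 - t) * x0 + t * y" by (simp add: algebra_simps)
      have "poly F ((1 - t) *\<^sub>R x0 + t *\<^sub>R y) \<le> (1 - t) * poly F x0 + t * poly F y"
        using convex_onD[OF cvx t01] by simp
      also have "\<dots> = m" using that by (simp add: m_def algebra_simps)
      finally have "poly F z \<le> m" using zt by simp
      moreover have "m \<le> poly F z" using minF by (simp add: m_def)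
      ultimately show "z \<in> {z. poly (F - [:m:]) z = 0}" by simp
    qed
    moreover have "infinite {min x0 y..max x0 y}" using ne
      by (intro infinite_Icc) (auto simp: min_def max_def)
    ultimately have "infinite {z. poly (F - [:m:]) z = 0}" using finite_subset by blast
    hence "F - [:m:] = 0" using poly_roots_finite by blast
    hence "F = [:m:]" by simp
    thus False using degF by simp
  qed
  define g where "g = f - [:q:]"
  define G where "G = R g"
  have G: "G = F - [:m:]" by (simp add: G_def g_def R_diff R_const F_def q)
  have rootG: "y = x0" if "poly G y = 0" for y using that uniq by (simp add: G)
  have Gx0: "poly G x0 = 0" by (simp add: G m_def)
  have degg: "degree g = 4"
  proof -
    have "degree G = 4" using degF degree_add_eq_left[of "[:-m:]" F] by (simp add: G diff_conv_add_uminus)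
    thus ?thesis by (simp add: G_def)
  qed
  define c where "c = pderiv g"
  have degc: "degree c = 3" using degg by (simp add: c_def degree_pderiv)
  hence c0: "c \<noteq> 0" by auto
  have Cx0: "poly (R c) x0 = 0"
  proof -
    have "DERIV (poly G) x0 :> poly (pderiv G) x0" by (rule poly_DERIV)
    moreover have "\<forall>y. \<bar>x0 - y\<bar> < 1 \<longrightarrow> poly G x0 \<le> poly G y"
      using minF by (simp add: G m_def)
    ultimately have "poly (pderiv G) x0 = 0" using DERIV_local_min[where f="poly G" and x=x0 and d=1] by simp
    thus ?thesis by (simp add: c_def R_pderiv G_def)
  qed
  define h where "h = gcd g c"
  have h0: "h \<noteq> 0" using c0 by (simp add: h_def)
  have hdc: "h dvd c" "h dvd g" by (simp_all add: h_def)
  have degh: "degree h \<le> 3" using dvd_imp_degree_le[OF hdc(1) c0] degc by simp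
  obtain k where k: "g = h * k" using hdc(2) by (auto elim: dvdE)
  have Hx0: "poly (R h) x0 = 0"
  proof -
    have "fst (bezout_coefficients g c) * g + snd (bezout_coefficients g c) * c = h"
      unfolding h_def by (rule bezout_coefficients_fst_snd)
    hence "R h = R (fst (bezout_coefficients g c)) * G + R (snd (bezout_coefficients g c)) * R c"
      by (metis R_add R_mult G_def)
    thus ?thesis using Gx0 Cx0 by simp
  qed
  have rootH: "y = x0" if "poly (R h) y = 0" for y
  proof -
    have "poly G y = 0" using that by (simp add: G_def k R_mult)
    thus ?thesis by (rule rootG)
  qed
  have lc: "coeff h (degree h) \<noteq> 0" using h0 by simp
  have "degree h \<noteq> 0"
  proof
    assume d: "degree h = 0"
    have "poly (R h) x0 = of_rat (coeff h 0)" by (simp add: poly_altdef d)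
    thus False using Hx0 lc d by simp
  qed
  then consider "degree h = 1" | "degree h = 2" | "degree h = 3" using degh by linarith
  thus "x0 \<in> \<rat>"
  proof cases
    case 1
    define a0 where "a0 = coeff h 0"
    define a1 where "a1 = coeff h 1"
    have a1: "a1 \<noteq> 0" using lc 1 by (simp add: a1_def)
    have "of_rat a0 + of_rat a1 * x0 = 0" using Hx0 1 by (simp add: poly_altdef a0_def a1_def)
    hence "x0 = - of_rat a0 / of_rat a1" using a1 by (simp add: field_simps)
    hence "x0 = of_rat (- a0 / a1)" by (simp add: of_rat_divide of_rat_minus)
    thus ?thesis by simp
  next
    case 2
    define a0 where "a0 = coeff h 0"
    define a1 where "a1 = coeff h 1"
    define a2 where "a2 = coeff h 2"
    have a2: "a2 \<noteq> 0" using lc 2 by (simp add: a2_def)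
    have ev: "poly (R h) y = of_rat a0 + of_rat a1 * y + of_rat a2 * y^2" for y
      using 2 by (simp add: poly_altdef a0_def a1_def a2_def numeral_2_eq_2 atMost_Suc)
    define x1 where "x1 = - of_rat a1 / of_rat a2 - x0"
    have "of_rat a0 + of_rat a1 * x0 + of_rat a2 * x0^2 = (0::real)" using Hx0 ev by simp
    hence "of_rat a0 + of_rat a1 * x1 + of_rat a2 * x1^2 = (0::real)"
      using a2 by (simp add: x1_def field_simps power2_eq_square)
    hence "x1 = x0" using rootH ev by simp
    hence "x0 = - of_rat a1 / (2 * of_rat a2)" using a2
      by (simp add: x1_def field_simps)
    hence "x0 = of_rat (- a1 / (2 * a2))" by (simp add: of_rat_divide of_rat_mult of_rat_minus)
    thus ?thesis by simp
  next
    case 3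
    have k0: "k \<noteq> 0" using k degg by auto
    have degk: "degree k = 1" using degg k 3 h0 k0 by (simp add: degree_mult_eq)
    define b0 where "b0 = coeff k 0"
    define b1 where "b1 = coeff k 1"
    have b1: "b1 \<noteq> 0" using degk k0 b1_def by (metis leading_coeff_0_iff)
    define r where "r = - b0 / b1"
    have "poly k r = 0" using degk b1 by (simp add: poly_altdef r_def b0_def b1_def)
    hence "poly g r = 0" by (simp add: k)
    hence "poly G (of_rat r) = 0" by (simp add: G_def R_poly)
    hence "of_rat r = x0" by (rule rootG)
    thus ?thesis by (metis Rats_of_rat)
  qed
qed

end
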